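(* Let $m\geq 1$ and let $\Lambda_m\subseteq\mathbb{R}^{2^m}$ be the Barnes–Wall lattice defined below, whose minimum is $2^{m-1}$. If $x\in\Lambda_m$ satisfies $(x,x)>2^{m-1}$, then $(x,x)\geq 2^{m-1}+2^{m-2}$.
   Context: Let $\mathcal{V}_m=\mathbb{F}_2^m$ and let $(e_v\mid v\in\mathcal{V}_m)$ be an orthonormal basis of Euclidean space $(\mathbb{R}^{2^m},(\cdot,\cdot))$ indexed by $\mathcal{V}_m$. For $\mathcal{U}\subseteq\mathcal{V}_m$ put $x_{\mathcal{U}}=\sum_{v\in\mathcal{U}}e_v$. Define $\Lambda_m=\langle 2^{\lfloor (m-r)/2\rfloor}x_{\mathcal{U}} \mid 0\le r\le m,\ \mathcal{U}\text{ an affine subspace of }\mathcal{V}_m\text{ of dimension }r\rangle_{\mathbb{Z}}$. The minimum (smallest value of $(x,x)$ for nonzero $x\in\Lambda_m$) equals $2^{m-1}$. *)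

theory Defs
  imports "HOL-Analysis.Analysis"
begin

text \<open>The space V_m = F_2^m, realised as boolean lists of length m; addition is
  componentwise exclusive or.\<close>

definition Vm :: "nat \<Rightarrow> bool list set" where
  "Vm m = {v. length v = m}"

definition vadd :: "bool list \<Rightarrow> bool list \<Rightarrow> bool list" where
  "vadd u v = map2 (\<noteq>) u v"

definition vzero :: "nat \<Rightarrow> bool list" where
  "vzero m = replicate m False"

text \<open>Linear subspace of F_2^m: contains 0 and is closed under addition
  (over F_2 closure under scalar multiplication is automatic).\<close>

definition lin_subspace :: "nat \<Rightarrow> bool list set \<Rightarrow> bool" where
  "lin_subspace m W \<longleftrightarrow> W \<subseteq> Vm m \<and> vzero m \<in> W \<and> (\<forall>u\<in>W. \<forall>v\<in>W. vadd u v \<in> W)"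

text \<open>Affine subspace of dimension r: a translate a + W of a linear subspace W of
  dimension r (over F_2, dim W = r iff card W = 2^r).\<close>

definition affine_subspace_dim :: "nat \<Rightarrow> nat \<Rightarrow> bool list set \<Rightarrow> bool" where
  "affine_subspace_dim m r U \<longleftrightarrow>
     (\<exists>a\<in>Vm m. \<exists>W. lin_subspace m W \<and> card W = 2 ^ r \<and> U = vadd a ` W)"

text \<open>Vectors of R^(2^m) with orthonormal basis (e_v | v in V_m) are functions
  V_m -> real (taken to vanish outside V_m).\<close>

definition xU :: "bool list set \<Rightarrow> (bool list \<Rightarrow> real)" where
  "xU U = (\<lambda>v. if v \<in> U then 1 else 0)"

definition ip :: "nat \<Rightarrow> (bool list \<Rightarrow> real) \<Rightarrow> (bool list \<Rightarrow> real) \<Rightarrow> real" where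
  "ip m x y = (\<Sum>v\<in>Vm m. x v * y v)"

definition int_span :: "(bool list \<Rightarrow> real) set \<Rightarrow> (bool list \<Rightarrow> real) set" where
  "int_span S = {(\<lambda>v. \<Sum>g\<in>G. of_int (c g) * g v) | G c. finite G \<and> G \<subseteq> S}"

definition BW_gens :: "nat \<Rightarrow> (bool list \<Rightarrow> real) set" where
  "BW_gens m = {(\<lambda>v. (2::real) ^ ((m - r) div 2) * xU U v) | r U.
                  r \<le> m \<and> affine_subspace_dim m r U}"

definition BW :: "nat \<Rightarrow> (bool list \<Rightarrow> real) set" where
  "BW m = int_span (BW_gens m)"

end

theory Submission
  imports Defs "HOL-Computational_Algebra.Primes"
begin

definition dvd2 :: "nat \<Rightarrow> real \<Rightarrow> bool" where
  "dvd2 e r \<longleftrightarrow> (\<exists>k::int. r = 2 ^ e * of_int k)"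

lemma dvd2_0: "dvd2 e 0"
  unfolding dvd2_def by (rule exI[of _ 0]) simp

lemma dvd2_add: "dvd2 e a \<Longrightarrow> dvd2 e b \<Longrightarrow> dvd2 e (a + b)"
  unfolding dvd2_def by (metis distrib_left of_int_add)

lemma dvd2_diff: "dvd2 e a \<Longrightarrow> dvd2 e b \<Longrightarrow> dvd2 e (a - b)"
  unfolding dvd2_def by (metis right_diff_distrib of_int_diff)

lemma dvd2_mult: "dvd2 e a \<Longrightarrow> dvd2 e (of_int c * a)"
  unfolding dvd2_def by (metis mult.left_commute of_int_mult)

lemma dvd2_mono: "e' \<le> e \<Longrightarrow> dvd2 e a \<Longrightarrow> dvd2 e' a"
proof -
  assume le: "e' \<le> e" and "dvd2 e a"
  then obtain k where k: "a = 2 ^ e * of_int k" unfolding dvd2_def by blast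
  have "(2::real) ^ e = 2 ^ e' * 2 ^ (e - e')" using le by (simp add: power_add[symmetric])
  then have "a = 2 ^ e' * of_int (2 ^ (e - e') * k)" using k by simp
  then show "dvd2 e' a" unfolding dvd2_def by blast
qed

lemma dvd2_half: "dvd2 (Suc e) a \<Longrightarrow> dvd2 e (a / 2)"
  unfolding dvd2_def by auto

lemma dvd2_sum: "finite G \<Longrightarrow> (\<And>g. g \<in> G \<Longrightarrow> dvd2 e (f g)) \<Longrightarrow> dvd2 e (\<Sum>g\<in>G. f g)"
  by (induction G rule: finite_induct) (auto intro: dvd2_add dvd2_0)

lemma dvd2_pow: "e \<le> t \<Longrightarrow> dvd2 e (2 ^ t)"
proof -
  assume "e \<le> t"
  then have "(2::real) ^ t = 2 ^ e * of_int (2 ^ (t - e))" by (simp add: power_add[symmetric])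
  then show ?thesis unfolding dvd2_def by blast
qed

lemma dvd2_int: "dvd2 0 a \<Longrightarrow> a \<in> \<int>"
  unfolding dvd2_def by auto

lemma int_sq_cases: "a \<in> \<int> \<Longrightarrow> a\<^sup>2 = 0 \<or> a\<^sup>2 \<ge> (1::real)"
proof -
  assume "a \<in> \<int>"
  then obtain k where k: "a = of_int k" by (auto elim: Ints_cases)
  show ?thesis
  proof (cases "k = 0")
    case True then show ?thesis using k by simp
  next
    case False
    then have k1: "1 \<le> \<bar>k\<bar>" by linarith
    have "1 * 1 \<le> \<bar>k\<bar> * \<bar>k\<bar>" by (rule mult_mono) (use k1 in auto)
    then have "k\<^sup>2 \<ge> 1" by (simp add: power2_eq_square)
    then have "(of_int k)\<^sup>2 \<ge> (1::real)" by (metis of_int_1_le_iff of_int_power)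
    then show ?thesis using k by simp
  qed
qed

lemma int_sq_half: "a \<in> \<int> \<Longrightarrow> 2 * a\<^sup>2 \<noteq> (1::real)"
proof
  assume "a \<in> \<int>" "2 * a\<^sup>2 = 1"
  then obtain k where k: "a = of_int k" by (auto elim: Ints_cases)
  then have "of_int (2 * k\<^sup>2) = (of_int 1 :: real)" using \<open>2 * a\<^sup>2 = 1\<close> by simp
  then have "2 * k\<^sup>2 = 1" using of_int_eq_iff by blast
  then show False by presburger
qed

lemma sum_sq_int: "finite A \<Longrightarrow> (\<And>v. v \<in> A \<Longrightarrow> x v \<in> \<int>) \<Longrightarrow> (\<Sum>v\<in>A. (x v)\<^sup>2) \<in> (\<int>::real set)"
  by (induction A rule: finite_induct) auto

lemma int_nonneg_cases: "(s::real) \<in> \<int> \<Longrightarrow> s \<ge> 0 \<Longrightarrow> s = 0 \<or> s = 1 \<or> s \<ge> 2"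
proof -
  assume "s \<in> \<int>" "s \<ge> 0"
  then obtain k where k: "s = of_int k" by (auto elim: Ints_cases)
  then have "k \<ge> 0" using \<open>s \<ge> 0\<close> by simp
  then have "k = 0 \<or> k = 1 \<or> k \<ge> 2" by linarith
  then show ?thesis using k by auto
qed

lemma pair_lemma:
  fixes f :: "'b \<Rightarrow> real" and n \<nu> S h :: real
  assumes fin: "finite A" and n: "real (card A) = n" and n4: "4 \<le> n" and nu: "\<nu> > 0"
    and gap: "\<And>C. C \<in> A \<Longrightarrow> f C = 0 \<or> 2 * f C = \<nu> \<or> 4 * f C \<ge> 3 * \<nu>"
    and S: "(\<Sum>C\<in>A. f C) = S" and lo: "n * \<nu> < 2 * S" and hi: "4 * S < 3 * n * \<nu>"
    and hdef: "2 * h = 2 * S - (n - 2) * \<nu>"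
    and pairs: "\<And>C C'. C \<in> A \<Longrightarrow> C' \<in> A \<Longrightarrow> C \<noteq> C' \<Longrightarrow> f C + f C' = \<nu> \<or> f C + f C' = h"
  shows "\<And>C. C \<in> A \<Longrightarrow> 2 * f C = \<nu> \<or> 2 * f C = 2 * h - \<nu>"
proof -
  have hnu: "h > \<nu>" using hdef lo by (simp add: algebra_simps)
  have four: "2 * f a = \<nu> \<or> 2 * f a = h \<or> 2 * f a = 2 * \<nu> - h \<or> 2 * f a = 2 * h - \<nu>"
    if a: "a \<in> A" for a
  proof -
    have cA: "card A \<ge> 4" using n n4 by simp
    have "card (A - {a}) = card A - 1" using a fin by (simp add: card_Diff_singleton)
    then have "card (A - {a}) > 0" using cA by simp
    then have "A - {a} \<noteq> {}" by (metis card.empty less_irrefl)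
    then obtain b where b: "b \<in> A - {a}" by blast
    have sub: "{a, b} \<subseteq> A" using a b by blast
    have "card {a, b} = 2" using b by auto
    then have "card (A - {a, b}) = card A - 2" using card_Diff_subset[OF _ sub] by simp
    then have "card (A - {a, b}) > 0" using cA by simp
    then have "A - {a, b} \<noteq> {}" by (metis card.empty less_irrefl)
    then obtain c where c: "c \<in> A - {a, b}" by blast
    have p1: "f a + f b = \<nu> \<or> f a + f b = h" using pairs a b by blast
    have p2: "f a + f c = \<nu> \<or> f a + f c = h" using pairs a c by blast
    have p3: "f b + f c = \<nu> \<or> f b + f c = h" using pairs b c by blast
    show ?thesis using p1 p2 p3 by argo
  qed
  fix C0 assume C0: "C0 \<in> A"
  show "2 * f C0 = \<nu> \<or> 2 * f C0 = 2 * h - \<nu>"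
  proof (rule ccontr)
    assume nC0: "\<not> ?thesis"
    then have q0: "2 * f C0 = h \<or> 2 * f C0 = 2 * \<nu> - h" using four[OF C0] by blast
    have q: "2 * f b = h \<or> 2 * f b = 2 * \<nu> - h" if b: "b \<in> A" for b
    proof (cases "b = C0")
      case True then show ?thesis using q0 by simp
    next
      case False
      have "f C0 + f b = \<nu> \<or> f C0 + f b = h" using pairs[OF C0 b] False by simp
      then show ?thesis using four[OF b] q0 hnu by argo
    qed
    define Z where "Z = {b \<in> A. 2 * f b \<noteq> h}"
    have Z0: "f b = 0" and h2: "h = 2 * \<nu>" if "b \<in> Z" for b
    proof -
      have bA: "b \<in> A" and fb: "2 * f b = 2 * \<nu> - h" using that q unfolding Z_def by auto
      then show "f b = 0" using gap[OF bA] hnu nu by argo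
      then show "h = 2 * \<nu>" using fb by simp
    qed
    have ZA: "Z \<subseteq> A" unfolding Z_def by blast
    have fZ: "finite Z" using fin ZA finite_subset by blast
    have Zle: "card Z \<le> 1"
    proof (rule ccontr)
      assume "\<not> card Z \<le> 1"
      then obtain b b' where "b \<in> Z" "b' \<in> Z" "b \<noteq> b'"
        using card_le_Suc0_iff_eq[OF fZ] by auto
      then have "f b + f b' = \<nu> \<or> f b + f b' = h" using pairs unfolding Z_def by blast
      then show False using Z0[OF \<open>b\<in>Z\<close>] Z0[OF \<open>b'\<in>Z\<close>] nu hnu by argo
    qed
    have "S = (\<Sum>C\<in>A - Z. f C) + (\<Sum>C\<in>Z. f C)" using S sum.subset_diff[OF ZA fin, of f] by simp
    also have "(\<Sum>C\<in>Z. f C) = 0" using Z0 by simp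
    also have "(\<Sum>C\<in>A - Z. f C) = (\<Sum>C\<in>A - Z. h / 2)"
      by (rule sum.cong) (auto simp: Z_def)
    also have "\<dots> = real (card (A - Z)) * h / 2" by simp
    also have "real (card (A - Z)) = n - real (card Z)" using card_Diff_subset[OF fZ ZA] n card_mono[OF fin ZA]
      by (simp add: of_nat_diff)
    finally have Seq: "S = (n - real (card Z)) * h / 2" by simp
    show False
    proof (cases "card Z = 0")
      case True
      then have "2 * S = n * h" using Seq by simp
      have hd: "2 * h = 2 * S - n * \<nu> + 2 * \<nu>" using hdef by (simp add: algebra_simps)
      have "n * h - 2 * h - n * \<nu> + 2 * \<nu> = 0" using hd \<open>2 * S = n * h\<close> by linarith
      then have "(n - 2) * (h - \<nu>) = 0" by (simp add: algebra_simps)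
      then show False using n4 hnu by simp
    next
      case False
      then have "card Z = 1" using Zle by simp
      then obtain b where "b \<in> Z" by (metis card_1_singletonE singletonI)
      then have "h = 2 * \<nu>" using h2 by blast
      then have "2 * S = (n - 1) * 2 * \<nu>" using Seq \<open>card Z = 1\<close> by simp
      have hd: "2 * h = 2 * S - n * \<nu> + 2 * \<nu>" using hdef by (simp add: algebra_simps)
      have e2: "2 * S = 2 * n * \<nu> - 2 * \<nu>" using \<open>2 * S = (n - 1) * 2 * \<nu>\<close> by (simp add: algebra_simps)
      have "n * \<nu> - 4 * \<nu> = 0" using hd e2 \<open>h = 2 * \<nu>\<close> by linarith
      then have "(n - 4) * \<nu> = 0" by (simp add: algebra_simps)
      then have "n = 4" using nu by simp
      then show False using hi \<open>2 * S = (n - 1) * 2 * \<nu>\<close> by simp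
    qed
  qed
qed



locale f2sp =
  fixes V :: "'a set" and add :: "'a \<Rightarrow> 'a \<Rightarrow> 'a" and z :: 'a and M :: nat
  assumes finV: "finite V" and cardV: "card V = 2 ^ M"
    and zV: "z \<in> V" and addV: "u \<in> V \<Longrightarrow> v \<in> V \<Longrightarrow> add u v \<in> V"
    and comm: "u \<in> V \<Longrightarrow> v \<in> V \<Longrightarrow> add u v = add v u"
    and assoc: "u \<in> V \<Longrightarrow> v \<in> V \<Longrightarrow> w \<in> V \<Longrightarrow> add (add u v) w = add u (add v w)"
    and zero: "u \<in> V \<Longrightarrow> add z u = u"
    and self: "u \<in> V \<Longrightarrow> add u u = z"
begin

definition subsp :: "'a set \<Rightarrow> bool" where
  "subsp W \<longleftrightarrow> W \<subseteq> V \<and> z \<in> W \<and> (\<forall>u\<in>W. \<forall>v\<in>W. add u v \<in> W)"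

definition flat :: "nat \<Rightarrow> 'a set \<Rightarrow> bool" where
  "flat r U \<longleftrightarrow> (\<exists>a\<in>V. \<exists>W. subsp W \<and> card W = 2 ^ r \<and> U = add a ` W)"

lemma zero2: "u \<in> V \<Longrightarrow> add u z = u"
  using comm zero zV by metis

lemma cancel: "a \<in> V \<Longrightarrow> u \<in> V \<Longrightarrow> add a (add a u) = u"
  by (metis assoc self zero)

lemma inj_add: "a \<in> V \<Longrightarrow> inj_on (add a) V"
  by (metis cancel inj_onI)

lemma subsp_V: "subsp W \<Longrightarrow> x \<in> W \<Longrightarrow> x \<in> V"
  unfolding subsp_def by blast

lemma subsp_fin: "subsp W \<Longrightarrow> finite W"
  unfolding subsp_def using finV finite_subset by blast

lemma coset_card: "a \<in> V \<Longrightarrow> W \<subseteq> V \<Longrightarrow> card (add a ` W) = card W"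
  by (meson card_image inj_add inj_on_subset)

lemma coset_sub: "a \<in> V \<Longrightarrow> W \<subseteq> V \<Longrightarrow> add a ` W \<subseteq> V"
  using addV by blast

lemma coset_mem_self: "a \<in> V \<Longrightarrow> subsp W \<Longrightarrow> a \<in> add a ` W"
  unfolding subsp_def by (metis image_eqI zero2)

lemma coset_mem_iff: "a \<in> V \<Longrightarrow> subsp W \<Longrightarrow> b \<in> V \<Longrightarrow> b \<in> add a ` W \<longleftrightarrow> add a b \<in> W"
proof
  assume "a \<in> V" "subsp W" "b \<in> V" "b \<in> add a ` W"
  then obtain w where "w \<in> W" "b = add a w" by blast
  then show "add a b \<in> W" using \<open>a\<in>V\<close> \<open>subsp W\<close> cancel subsp_V by metis
next
  assume "a \<in> V" "subsp W" "b \<in> V" "add a b \<in> W"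
  then show "b \<in> add a ` W" using cancel by (metis image_eqI)
qed

lemma coset_rebase: "a \<in> V \<Longrightarrow> subsp W \<Longrightarrow> b \<in> add a ` W \<Longrightarrow> add b ` W = add a ` W"
proof -
  assume a: "a \<in> V" and W: "subsp W" and b: "b \<in> add a ` W"
  then obtain w0 where w0: "w0 \<in> W" "b = add a w0" by blast
  have w0V: "w0 \<in> V" using w0 W subsp_V by blast
  have bV: "b \<in> V" using a w0V w0 addV by blast
  show ?thesis
  proof
    show "add b ` W \<subseteq> add a ` W"
    proof
      fix y assume "y \<in> add b ` W"
      then obtain w where w: "w \<in> W" "y = add b w" by blast
      have wV: "w \<in> V" using w W subsp_V by blast
      have "y = add a (add w0 w)" using w w0 assoc a w0V wV by simp
      moreover have "add w0 w \<in> W" using W w w0 unfolding subsp_def by blast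
      ultimately show "y \<in> add a ` W" by blast
    qed
  next
    show "add a ` W \<subseteq> add b ` W"
    proof
      fix y assume "y \<in> add a ` W"
      then obtain w where w: "w \<in> W" "y = add a w" by blast
      have wV: "w \<in> V" using w W subsp_V by blast
      have "add b (add w0 w) = add a (add w0 (add w0 w))"
        using w0 assoc a w0V wV addV by simp
      also have "\<dots> = y" using cancel w0V wV w by simp
      finally have "y = add b (add w0 w)" by simp
      moreover have "add w0 w \<in> W" using W w w0 unfolding subsp_def by blast
      ultimately show "y \<in> add b ` W" by blast
    qed
  qed
qed

lemma coset_disj: "a \<in> V \<Longrightarrow> b \<in> V \<Longrightarrow> subsp W \<Longrightarrow> add a ` W \<inter> add b ` W \<noteq> {} \<Longrightarrow> add a ` W = add b ` W"
  by (metis coset_rebase disjoint_iff)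

lemma subsp_add: "subsp W \<Longrightarrow> u \<in> W \<Longrightarrow> v \<in> W \<Longrightarrow> add u v \<in> W"
  unfolding subsp_def by blast

lemma subsp_z: "subsp W \<Longrightarrow> z \<in> W"
  unfolding subsp_def by blast

lemma subsp_sub: "subsp W \<Longrightarrow> W \<subseteq> V"
  unfolding subsp_def by blast

lemma coset_partition:
  assumes D: "subsp D" and S: "S \<subseteq> V" and cl: "\<And>s d. s \<in> S \<Longrightarrow> d \<in> D \<Longrightarrow> add s d \<in> S"
  defines "A \<equiv> (\<lambda>b. add b ` D) ` S"
  shows "\<Union>A = S" "\<And>C. C \<in> A \<Longrightarrow> card C = card D"
    "\<And>C C'. C \<in> A \<Longrightarrow> C' \<in> A \<Longrightarrow> C \<noteq> C' \<Longrightarrow> C \<inter> C' = {}"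
    "finite A" "card D * card A = card S"
proof -
  have DV: "D \<subseteq> V" using D subsp_sub by blast
  show U: "\<Union>A = S"
  proof
    show "\<Union>A \<subseteq> S"
    proof
      fix y assume "y \<in> \<Union>A"
      then obtain b d where "b \<in> S" "d \<in> D" "y = add b d" unfolding A_def by blast
      then show "y \<in> S" using cl by simp
    qed
    show "S \<subseteq> \<Union>A"
    proof
      fix y assume y: "y \<in> S"
      then have "y \<in> add y ` D" using coset_mem_self D S by blast
      moreover have "add y ` D \<in> A" unfolding A_def using y by blast
      ultimately show "y \<in> \<Union>A" by blast
    qed
  qed
  show cd: "\<And>C. C \<in> A \<Longrightarrow> card C = card D"
  proof -
    fix C assume "C \<in> A"
    then obtain b where "b \<in> S" "C = add b ` D" unfolding A_def by blast
    then show "card C = card D" using coset_card[OF _ DV] S by blast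
  qed
  show dj: "\<And>C C'. C \<in> A \<Longrightarrow> C' \<in> A \<Longrightarrow> C \<noteq> C' \<Longrightarrow> C \<inter> C' = {}"
  proof -
    fix C C' assume "C \<in> A" "C' \<in> A" "C \<noteq> C'"
    then obtain b b' where "b \<in> S" "C = add b ` D" "b' \<in> S" "C' = add b' ` D" unfolding A_def by blast
    then show "C \<inter> C' = {}" using coset_disj[OF _ _ D] S \<open>C \<noteq> C'\<close> by blast
  qed
  have fS: "finite S" using S finV finite_subset by blast
  show fA: "finite A" unfolding A_def using fS by simp
  have "card D * card A = card (\<Union>A)"
    by (rule card_partition[OF fA]) (use U fS cd dj in auto)
  then show "card D * card A = card S" using U by simp
qed

lemma card_pow2: assumes "subsp W" shows "\<exists>r\<le>M. card W = 2 ^ r"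
proof -
  have "card W * card ((\<lambda>b. add b ` W) ` V) = card V"
    using coset_partition(5)[OF assms, of V] addV assms subsp_V by blast
  then have "card W dvd 2 ^ M" using cardV by (metis dvd_triv_left)
  then show ?thesis using divides_primepow_nat[of 2] by auto
qed

lemma flat_basic:
  assumes "flat r U"
  shows "U \<subseteq> V" "finite U" "card U = 2 ^ r" "U \<noteq> {}"
proof -
  from assms obtain a W where a: "a \<in> V" and W: "subsp W" "card W = 2 ^ r" "U = add a ` W"
    unfolding flat_def by blast
  show "U \<subseteq> V" using W a coset_sub subsp_sub by blast
  then show "finite U" using finV finite_subset by blast
  show "card U = 2 ^ r" using W a coset_card subsp_sub by simp
  then show "U \<noteq> {}" by (metis card.empty power_not_zero zero_neq_numeral)
qed

lemma flat_base:
  assumes "flat r U" "b \<in> U"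
  shows "\<exists>W. subsp W \<and> card W = 2 ^ r \<and> U = add b ` W"
proof -
  from assms obtain a W where a: "a \<in> V" and W: "subsp W" "card W = 2 ^ r" "U = add a ` W"
    unfolding flat_def by blast
  then show ?thesis using coset_rebase assms(2) by metis
qed

lemma flat_of_base: "b \<in> V \<Longrightarrow> subsp W \<Longrightarrow> card W = 2 ^ r \<Longrightarrow> flat r (add b ` W)"
  unfolding flat_def by blast

lemma coset_dir_sub:
  assumes "b \<in> V" "subsp D" "subsp E" "add b ` D \<subseteq> add b ` E"
  shows "D \<subseteq> E"
proof
  fix d assume d: "d \<in> D"
  then have "add b d \<in> add b ` E" using assms by blast
  moreover have "add b d \<in> V" using d assms addV subsp_V by blast
  ultimately have "add b (add b d) \<in> E" using coset_mem_iff assms by blast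
  then show "d \<in> E" using cancel assms d subsp_V by metis
qed

lemma coset_closed:
  assumes "a \<in> V" "subsp E" "h \<in> add a ` E" "e \<in> E"
  shows "add h e \<in> add a ` E"
proof -
  obtain w where w: "w \<in> E" "h = add a w" using assms by blast
  have "add h e = add a (add w e)" using w assms assoc subsp_V by metis
  moreover have "add w e \<in> E" using w assms subsp_add by blast
  ultimately show ?thesis by blast
qed

lemma swap: "u \<in> V \<Longrightarrow> v \<in> V \<Longrightarrow> w \<in> V \<Longrightarrow> add u (add v w) = add v (add u w)"
proof -
  assume V: "u \<in> V" "v \<in> V" "w \<in> V"
  have "add u (add v w) = add (add u v) w" using assoc V by simp
  also have "\<dots> = add (add v u) w" using comm V by simp
  also have "\<dots> = add v (add u w)" using assoc V by simp
  finally show ?thesis .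
qed

lemma subsp_ext:
  assumes D: "subsp D" and e: "e \<in> V" "e \<notin> D"
  shows "subsp (D \<union> add e ` D)" "card (D \<union> add e ` D) = 2 * card D"
    "D \<inter> add e ` D = {}"
proof -
  have DV: "D \<subseteq> V" using D subsp_sub by blast
  show dj: "D \<inter> add e ` D = {}"
  proof (rule ccontr)
    assume "D \<inter> add e ` D \<noteq> {}"
    then obtain d d' where dd: "d \<in> D" "d' \<in> D" "d = add e d'" by blast
    have V: "d' \<in> V" using dd DV by blast
    have "add d d' = add e (add d' d')" unfolding dd(3) using assoc[OF e(1) V V] .
    also have "\<dots> = e" using self[OF V] zero2[OF e(1)] by simp
    finally have "add d d' = e" .
    moreover have "add d d' \<in> D" using subsp_add[OF D dd(1) dd(2)] .
    ultimately show False using e(2) by simp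
  qed
  show "card (D \<union> add e ` D) = 2 * card D"
  proof -
    have "card (D \<union> add e ` D) = card D + card (add e ` D)"
      using card_Un_disjoint[OF subsp_fin[OF D] finite_imageI[OF subsp_fin[OF D]] dj] .
    then show ?thesis using coset_card[OF e(1) DV] by simp
  qed
  show "subsp (D \<union> add e ` D)"
    unfolding subsp_def
  proof (intro conjI ballI)
    show "D \<union> add e ` D \<subseteq> V" using DV coset_sub[OF e(1) DV] by (rule Un_least)
    show "z \<in> D \<union> add e ` D" using subsp_z[OF D] by (rule UnI1)
    fix u v assume u: "u \<in> D \<union> add e ` D" and v: "v \<in> D \<union> add e ` D"
    show "add u v \<in> D \<union> add e ` D"
    proof (cases "u \<in> D")
      case True
      then have uV: "u \<in> V" using DV by blast
      show ?thesis
      proof (cases "v \<in> D")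
        case True show ?thesis by (rule UnI1[OF subsp_add[OF D \<open>u\<in>D\<close> True]])
      next
        case False
        then obtain d where d: "d \<in> D" "v = add e d" using v by blast
        have dV: "d \<in> V" using d DV by blast
        have "add u v = add e (add u d)" unfolding d(2) by (rule swap[OF uV e(1) dV])
        moreover have "add u d \<in> D" using subsp_add[OF D \<open>u\<in>D\<close> d(1)] .
        ultimately show ?thesis by blast
      qed
    next
      case False
      then obtain d where d: "d \<in> D" "u = add e d" using u by blast
      have dV: "d \<in> V" using d DV by blast
      show ?thesis
      proof (cases "v \<in> D")
        case True
        have vV: "v \<in> V" using True DV by blast
        have "add u v = add e (add d v)" unfolding d(2) by (rule assoc[OF e(1) dV vV])
        moreover have "add d v \<in> D" using subsp_add[OF D d(1) True] .
        ultimately show ?thesis by blast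
      next
        case False
        then obtain d' where d': "d' \<in> D" "v = add e d'" using v by blast
        have d'V: "d' \<in> V" using d' DV by blast
        have "add u v = add e (add d (add e d'))" unfolding d(2) d'(2)
          by (rule assoc[OF e(1) dV addV[OF e(1) d'V]])
        also have "\<dots> = add e (add e (add d d'))" using swap[OF dV e(1) d'V] by simp
        also have "\<dots> = add d d'" by (rule cancel[OF e(1) addV[OF dV d'V]])
        finally show ?thesis using subsp_add[OF D d(1) d'(1)] by simp
      qed
    qed
  qed
qed

lemma coset_union:
  assumes a: "a \<in> V" and b: "b \<in> V" and D: "subsp D" and ne: "add a ` D \<noteq> add b ` D"
  shows "add (add a b) ` D \<inter> D = {}" "add a b \<notin> D"
    "add a ` D \<union> add b ` D = add a ` (D \<union> add (add a b) ` D)"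
proof -
  have DV: "D \<subseteq> V" using D subsp_sub by blast
  show nD: "add a b \<notin> D"
  proof
    assume "add a b \<in> D"
    then have "b \<in> add a ` D" using coset_mem_iff a b D by blast
    then have "add b ` D = add a ` D" by (rule coset_rebase[OF a D])
    then show False using ne by simp
  qed
  show "add (add a b) ` D \<inter> D = {}" using subsp_ext(3)[OF D addV[OF a b] nD] by (simp add: Int_commute)
  have "add a ` add (add a b) ` D = add b ` D"
  proof -
    have "add a (add (add a b) d) = add b d" if d: "d \<in> D" for d
    proof -
      have dV: "d \<in> V" using d DV by blast
      have "add a (add (add a b) d) = add (add a (add a b)) d"
        using assoc[OF a addV[OF a b] dV] by simp
      also have "\<dots> = add b d" using cancel[OF a b] by simp
      finally show ?thesis .
    qed
    then show ?thesis by (auto simp: image_iff)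
  qed
  then show "add a ` D \<union> add b ` D = add a ` (D \<union> add (add a b) ` D)" by (simp add: image_Un)
qed

lemma flat_union:
  assumes a: "a \<in> V" and b: "b \<in> V" and D: "subsp D" "card D = 2 ^ i" and ne: "add a ` D \<noteq> add b ` D"
  shows "flat (Suc i) (add a ` D \<union> add b ` D)"
proof -
  have nD: "add a b \<notin> D" using coset_union[OF a b D(1) ne] by blast
  have V: "add a b \<in> V" using a b addV by blast
  show ?thesis using coset_union(3)[OF a b D(1) ne] subsp_ext[OF D(1) V nD] D(2) a
    flat_of_base by simp
qed

lemma subsp_exists:
  assumes E: "subsp E" and t: "2 ^ t \<le> card E"
  shows "\<exists>D. subsp D \<and> D \<subseteq> E \<and> card D = 2 ^ t"
  using t
proof (induction t)
  case 0
  have "subsp {z}" unfolding subsp_def using zV zero by auto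
  then show ?case using E subsp_z by auto
next
  case (Suc t)
  have c2: "2 * 2 ^ t \<le> card E" using Suc.prems by simp
  have "(2::nat)^t < 2*2^t" by simp
  then have "2 ^ t \<le> card E" using c2 by linarith
  then obtain D where D: "subsp D" "D \<subseteq> E" "card D = 2 ^ t" using Suc.IH by blast
  have "card D < card E" using D(3) c2 \<open>(2::nat)^t < 2*2^t\<close> by linarith
  have "\<not> E \<subseteq> D"
  proof
    assume "E \<subseteq> D"
    then have "card E \<le> card D" by (rule card_mono[OF subsp_fin[OF D(1)]])
    then show False using \<open>card D < card E\<close> by simp
  qed
  then obtain e where e: "e \<in> E" "e \<notin> D" by blast
  have eV: "e \<in> V" using e E subsp_V by blast
  have "add e ` D \<subseteq> E"
  proof
    fix y assume "y \<in> add e ` D"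
    then obtain d where "d \<in> D" "y = add e d" by blast
    then show "y \<in> E" using subsp_add[OF E e(1)] D(2) by blast
  qed
  then have "D \<union> add e ` D \<subseteq> E" using D(2) by blast
  then show ?case using subsp_ext[OF D(1) eV e(2)] D by auto
qed

lemma inter_card:
  assumes W1: "subsp W1" and W2: "subsp W2" and E: "subsp E" and s: "W1 \<subseteq> E" "W2 \<subseteq> E"
  shows "card W1 * card W2 \<le> card (W1 \<inter> W2) * card E"
proof -
  let ?f = "\<lambda>p. add (fst p) (snd p)"
  let ?P = "W1 \<times> W2"
  have fin: "finite ?P" using subsp_fin W1 W2 by blast
  have img: "?f ` ?P \<subseteq> E" using s E subsp_add[of E] by fastforce
  have fib: "card {p \<in> ?P. ?f p = s} \<le> card (W1 \<inter> W2)" if "s \<in> ?f ` ?P" for s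
  proof -
    obtain a0 b0 where p0: "a0 \<in> W1" "b0 \<in> W2" "s = add a0 b0" using \<open>s \<in> ?f ` ?P\<close> by auto
    have "{p \<in> ?P. ?f p = s} \<subseteq> (\<lambda>w. (add a0 w, add b0 w)) ` (W1 \<inter> W2)"
    proof
      fix p assume p: "p \<in> {p \<in> ?P. ?f p = s}"
      obtain a b where ab: "p = (a, b)" "a \<in> W1" "b \<in> W2" "add a b = s" using p by auto
      have V: "a \<in> V" "b \<in> V" "a0 \<in> V" "b0 \<in> V" using ab p0 W1 W2 subsp_V by auto
      have eq: "add a0 a = add b0 b"
      proof -
        have "add (add a b) b = a" using assoc[OF V(1) V(2) V(2)] self[OF V(2)] zero2[OF V(1)] by simp
        then have "add a0 a = add a0 (add (add a b) b)" by simp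
        also have "\<dots> = add a0 (add (add a0 b0) b)" using ab p0 by simp
        also have "\<dots> = add (add a0 (add a0 b0)) b" using assoc[OF V(3) addV[OF V(3) V(4)] V(2)] by simp
        also have "\<dots> = add b0 b" using cancel[OF V(3) V(4)] by simp
        finally show ?thesis .
      qed
      have "add a0 a \<in> W1" using subsp_add[OF W1 p0(1) ab(2)] .
      moreover have "add b0 b \<in> W2" using subsp_add[OF W2 p0(2) ab(3)] .
      ultimately have w: "add a0 a \<in> W1 \<inter> W2" using eq by simp
      have "a = add a0 (add a0 a)" using cancel[OF V(3) V(1)] by simp
      moreover have "b = add b0 (add a0 a)" using cancel[OF V(4) V(2)] eq by simp
      ultimately show "p \<in> (\<lambda>w. (add a0 w, add b0 w)) ` (W1 \<inter> W2)" using ab(1) w by blast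
    qed
    then have "card {p \<in> ?P. ?f p = s} \<le> card ((\<lambda>w. (add a0 w, add b0 w)) ` (W1 \<inter> W2))"
      by (rule card_mono[OF finite_imageI[OF finite_Int[OF disjI1[OF subsp_fin[OF W1]]]]])
    also have "\<dots> \<le> card (W1 \<inter> W2)" by (rule card_image_le[OF finite_Int[OF disjI1[OF subsp_fin[OF W1]]]])
    finally show ?thesis .
  qed
  have "?P = (\<Union>s\<in>?f ` ?P. {p \<in> ?P. ?f p = s})" by auto
  then have "card ?P \<le> (\<Sum>s\<in>?f ` ?P. card {p \<in> ?P. ?f p = s})"
    using card_UN_le[of "?f ` ?P" "\<lambda>s. {p \<in> ?P. ?f p = s}"] fin by (metis finite_imageI)
  also have "\<dots> \<le> (\<Sum>s\<in>?f ` ?P. card (W1 \<inter> W2))" using fib by (meson sum_mono)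
  also have "\<dots> = card (?f ` ?P) * card (W1 \<inter> W2)" by simp
  also have "\<dots> \<le> card E * card (W1 \<inter> W2)"
    using card_mono[OF subsp_fin[OF E] img] by (rule mult_right_mono) simp
  finally show ?thesis by (simp add: card_cartesian_product mult.commute)
qed

lemma subsp_inter: "subsp W1 \<Longrightarrow> subsp W2 \<Longrightarrow> subsp (W1 \<inter> W2)"
  unfolding subsp_def by blast

lemma flat_inter:
  assumes F: "flat i F" and U: "flat r U" and ne: "F \<inter> U \<noteq> {}"
    and H: "flat j H" and FH: "F \<subseteq> H" and UH: "U \<subseteq> H"
  shows "\<exists>t. flat t (F \<inter> U) \<and> 2 ^ i * 2 ^ r \<le> (2::nat) ^ t * 2 ^ j"
proof -
  obtain c where c: "c \<in> F" "c \<in> U" using ne by blast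
  obtain D where D: "subsp D" "card D = 2 ^ i" "F = add c ` D" using flat_base F c by blast
  obtain D' where D': "subsp D'" "card D' = 2 ^ r" "U = add c ` D'" using flat_base U c by blast
  obtain E where E: "subsp E" "card E = 2 ^ j" "H = add c ` E" using flat_base H c FH by blast
  have cV: "c \<in> V" using c F flat_basic by blast
  have "D \<subseteq> E" using coset_dir_sub cV D E FH by metis
  moreover have "D' \<subseteq> E" using coset_dir_sub cV D' E UH by metis
  ultimately have le: "card D * card D' \<le> card (D \<inter> D') * card E"
    using inter_card D D' E by blast
  obtain t where t: "card (D \<inter> D') = 2 ^ t" using card_pow2 subsp_inter D D' by blast
  have "F \<inter> U = add c ` (D \<inter> D')"
    using D D' inj_add[OF cV] subsp_sub by (simp add: inj_on_image_Int)
  then have "flat t (F \<inter> U)" using flat_of_base cV subsp_inter D D' t by simp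
  then show ?thesis using le D D' E t by auto
qed

lemma flat_transl:
  assumes F: "flat i F" and c: "c \<in> V"
  shows "flat i (add c ` F)"
proof -
  obtain a W where a: "a \<in> V" and W: "subsp W" "card W = 2 ^ i" "F = add a ` W"
    using F unfolding flat_def by blast
  have "add c ` F = add (add c a) ` W"
  proof -
    have "\<And>w. w \<in> W \<Longrightarrow> add c (add a w) = add (add c a) w" using assoc a c W subsp_V by metis
    then show ?thesis using W(3) by (auto simp: image_iff)
  qed
  then show ?thesis using flat_of_base W addV a c by simp
qed

lemma flat_V: "flat M V"
proof -
  have "subsp V" unfolding subsp_def using zV addV by blast
  moreover have "V = add z ` V"
  proof -
    have "add z ` V = (\<lambda>u. u) ` V" by (rule image_cong) (simp_all add: zero)
    then show ?thesis by simp
  qed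
  ultimately show ?thesis using flat_of_base zV cardV by metis
qed

lemma flat0: "flat 0 F \<longleftrightarrow> (\<exists>v\<in>V. F = {v})"
proof
  assume "flat 0 F"
  then obtain a W where a: "a \<in> V" and W: "subsp W" "card W = 1" "F = add a ` W"
    unfolding flat_def by auto
  then obtain w where "W = {w}" using card_1_singletonE by blast
  then have "W = {z}" using subsp_z[OF W(1)] by blast
  then show "\<exists>v\<in>V. F = {v}" using W a zero2 by auto
next
  assume "\<exists>v\<in>V. F = {v}"
  then obtain v where v: "v \<in> V" "F = {v}" by blast
  have "subsp {z}" unfolding subsp_def using zV zero by auto
  moreover have "F = add v ` {z}" using v zero2 by auto
  moreover have "card {z} = 2 ^ 0" by simp
  ultimately show "flat 0 F" using flat_of_base v by blast
qed

lemma two_cosets: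
  assumes D: "subsp D" and E: "subsp E" and DE: "D \<subseteq> E" and cE: "card E = 2 * card D"
    and a: "a \<in> V" and e: "e \<in> E" "e \<notin> D"
  shows "add a ` E = add a ` D \<union> add (add a e) ` D" "add a ` D \<inter> add (add a e) ` D = {}"
proof -
  have eV: "e \<in> V" using e E subsp_V by blast
  have aeV: "add a e \<in> V" using addV[OF a eV] .
  have DV: "D \<subseteq> V" using D subsp_sub by blast
  have ne: "add a ` D \<noteq> add (add a e) ` D"
  proof
    assume "add a ` D = add (add a e) ` D"
    then have "add a e \<in> add a ` D" using coset_mem_self[OF aeV D] by simp
    then have "add a (add a e) \<in> D" using coset_mem_iff[OF a D aeV] by simp
    then show False using cancel[OF a eV] e(2) by simp
  qed
  show dj: "add a ` D \<inter> add (add a e) ` D = {}"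
    using coset_disj[OF a aeV D] ne by blast
  have sub: "add a ` D \<union> add (add a e) ` D \<subseteq> add a ` E"
  proof
    fix y assume "y \<in> add a ` D \<union> add (add a e) ` D"
    then show "y \<in> add a ` E"
    proof
      assume "y \<in> add a ` D" then show ?thesis using DE by blast
    next
      assume "y \<in> add (add a e) ` D"
      then obtain d where d: "d \<in> D" "y = add (add a e) d" by blast
      have dV: "d \<in> V" using d(1) DV by blast
      have "y = add a (add e d)" using assoc[OF a eV dV] d(2) by simp
      moreover have "add e d \<in> E" using subsp_add[OF E e(1)] d DE by blast
      ultimately show ?thesis by blast
    qed
  qed
  have fD: "finite D" using subsp_fin[OF D] .
  have "card (add a ` D \<union> add (add a e) ` D) = card D + card D"
    using card_Un_disjoint[OF finite_imageI[OF fD] finite_imageI[OF fD] dj]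
      coset_card[OF a DV] coset_card[OF aeV DV] by simp
  also have "\<dots> = card (add a ` E)" using cE coset_card[OF a subsp_sub[OF E]] by simp
  finally have "card (add a ` D \<union> add (add a e) ` D) = card (add a ` E)" .
  then show "add a ` E = add a ` D \<union> add (add a e) ` D"
    using card_subset_eq[OF finite_imageI[OF subsp_fin[OF E]] sub] by simp
qed

lemma exists_outside:
  assumes D: "subsp D" and E: "subsp E" and DE: "D \<subseteq> E" and cE: "card E = 2 * card D"
  shows "\<exists>e\<in>E. e \<notin> D"
proof (rule ccontr)
  assume "\<not> (\<exists>e\<in>E. e \<notin> D)"
  then have "E = D" using DE by blast
  then have "card D = 0" using cE by simp
  moreover have "card D > 0" using subsp_z[OF D] subsp_fin[OF D] card_gt_0_iff by blast
  ultimately show False by simp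
qed

lemma hyper_compl:
  assumes H: "flat (Suc k) H" and K: "flat k K" and KH: "K \<subseteq> H"
  shows "flat k (H - K)" "\<exists>e\<in>V. \<forall>v\<in>K. add e v \<in> H - K"
proof -
  obtain a where aK: "a \<in> K" using flat_basic(4)[OF K] by blast
  obtain D where D: "subsp D" "card D = 2 ^ k" "K = add a ` D" using flat_base[OF K aK] by blast
  have aH: "a \<in> H" using aK KH by blast
  obtain E where E: "subsp E" "card E = 2 ^ Suc k" "H = add a ` E" using flat_base[OF H aH] by blast
  have aV: "a \<in> V" using aK flat_basic(1)[OF K] by blast
  have DE: "D \<subseteq> E" using coset_dir_sub[OF aV D(1) E(1)] KH D E by simp
  have cE: "card E = 2 * card D" using D E by simp
  obtain e where e: "e \<in> E" "e \<notin> D" using exists_outside[OF D(1) E(1) DE cE] by blast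
  have tc: "add a ` E = add a ` D \<union> add (add a e) ` D" "add a ` D \<inter> add (add a e) ` D = {}"
    using two_cosets[OF D(1) E(1) DE cE aV e] by auto
  have eq: "H - K = add (add a e) ` D" using tc D(3) E(3) by blast
  have eV: "e \<in> V" using e E subsp_V by blast
  show "flat k (H - K)" using eq flat_of_base[OF addV[OF aV eV] D(1) D(2)] by simp
  show "\<exists>e\<in>V. \<forall>v\<in>K. add e v \<in> H - K"
  proof (intro bexI ballI)
    fix v assume "v \<in> K"
    then obtain d where d: "d \<in> D" "v = add a d" using D(3) by blast
    have dV: "d \<in> V" using d D(1) subsp_V by blast
    have "add e v = add (add a e) d" using d swap[OF eV aV dV] assoc[OF aV eV dV] by simp
    then show "add e v \<in> H - K" using eq d by blast
  qed (rule eV)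
qed

lemma transl_union:
  assumes F: "flat i F" and c: "c \<in> V"
  shows "add c ` F = F \<or> (F \<inter> add c ` F = {} \<and> flat (Suc i) (F \<union> add c ` F))"
proof -
  obtain a W where a: "a \<in> V" and W: "subsp W" "card W = 2 ^ i" "F = add a ` W"
    using F unfolding flat_def by blast
  have WV: "W \<subseteq> V" using W subsp_sub by blast
  have cF: "add c ` F = add (add c a) ` W"
  proof -
    have "\<And>w. w \<in> W \<Longrightarrow> add c (add a w) = add (add c a) w" using assoc[OF c a] WV by auto
    then show ?thesis using W(3) by (auto simp: image_iff)
  qed
  have caV: "add c a \<in> V" using addV[OF c a] .
  show ?thesis
  proof (cases "add a ` W = add (add c a) ` W")
    case True then show ?thesis using cF W(3) by simp
  next
    case False
    have "F \<inter> add c ` F = {}" using coset_disj[OF a caV W(1)] False cF W(3) by blast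
    moreover have "flat (Suc i) (F \<union> add c ` F)" using flat_union[OF a caV W(1) W(2) False] cF W(3) by simp
    ultimately show ?thesis by blast
  qed
qed

lemma split_flat:
  assumes K: "flat (Suc k) K"
  shows "\<exists>K' c. flat k K' \<and> K' \<subseteq> K \<and> c \<in> V \<and> (\<forall>v\<in>K. add c v \<in> K) \<and> add c ` K' = K - K'"
proof -
  obtain a where aK: "a \<in> K" using flat_basic(4)[OF K] by blast
  obtain E where E: "subsp E" "card E = 2 ^ Suc k" "K = add a ` E" using flat_base[OF K aK] by blast
  have "2 ^ k \<le> card E" using E(2) by simp
  then obtain D where D: "subsp D" "D \<subseteq> E" "card D = 2 ^ k" using subsp_exists[OF E(1)] by blast
  have aV: "a \<in> V" using aK flat_basic(1)[OF K] by blast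
  have cE: "card E = 2 * card D" using D E by simp
  obtain e where e: "e \<in> E" "e \<notin> D" using exists_outside[OF D(1) E(1) D(2) cE] by blast
  have eV: "e \<in> V" using e E subsp_V by blast
  have tc: "add a ` E = add a ` D \<union> add (add a e) ` D" "add a ` D \<inter> add (add a e) ` D = {}"
    using two_cosets[OF D(1) E(1) D(2) cE aV e] by auto
  have DV: "D \<subseteq> V" using D subsp_sub by blast
  have ce: "add e ` (add a ` D) = add (add a e) ` D"
  proof -
    have "\<And>d. d \<in> D \<Longrightarrow> add e (add a d) = add (add a e) d"
      using swap[OF eV aV] assoc[OF aV eV] DV by auto
    then show ?thesis by (auto simp: image_iff)
  qed
  show ?thesis
  proof (intro exI conjI)
    show "flat k (add a ` D)" using flat_of_base[OF aV D(1) D(3)] .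
    show "add a ` D \<subseteq> K" unfolding E(3) tc(1) by (rule Un_upper1)
    show "e \<in> V" by (rule eV)
    show "\<forall>v\<in>K. add e v \<in> K"
    proof
      fix v assume "v \<in> K"
      then have "add v e \<in> add a ` E" using E(3) coset_closed[OF aV E(1) _ e(1)] by simp
      then have "add v e \<in> K" using E(3) by simp
      moreover have "v \<in> V" using \<open>v \<in> K\<close> flat_basic(1)[OF K] by blast
      ultimately show "add e v \<in> K" using comm[OF eV] by simp
    qed
    have "K - add a ` D = add (add a e) ` D - add a ` D" unfolding E(3) tc(1) by (simp only: Un_Diff Diff_cancel Un_empty_left)
    also have "\<dots> = add (add a e) ` D" using tc(2) by (simp add: Diff_triv Int_commute)
    finally show "add e ` add a ` D = K - add a ` D" using ce by simp
  qed
qed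

end


context f2sp
begin

definition DIV0 :: "'a set \<Rightarrow> ('a \<Rightarrow> real) \<Rightarrow> bool" where
  "DIV0 H x \<longleftrightarrow> (\<forall>i F. flat i F \<longrightarrow> F \<subseteq> H \<longrightarrow> dvd2 (i div 2) (\<Sum>v\<in>F. x v))"

definition gapset :: "nat \<Rightarrow> real \<Rightarrow> bool" where
  "gapset j s \<longleftrightarrow> s = 0 \<or> 2 * s = 2 ^ j \<or> 4 * s \<ge> 3 * 2 ^ j"

lemma DIV0_int: "DIV0 H x \<Longrightarrow> v \<in> H \<Longrightarrow> v \<in> V \<Longrightarrow> x v \<in> \<int>"
proof -
  assume D: "DIV0 H x" and v: "v \<in> H" "v \<in> V"
  have "flat 0 {v}" using flat0 v by blast
  then have "dvd2 0 (\<Sum>u\<in>{v}. x u)" using D v unfolding DIV0_def by fastforce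
  then show "x v \<in> \<int>" using dvd2_int by simp
qed

lemma sum_if_out: "finite F \<Longrightarrow> (\<Sum>v\<in>F. if v \<in> K' then 0 else g v) = (\<Sum>v\<in>F - K'. (g v :: real))"
  by (rule sum.mono_neutral_cong_right) auto

lemma reidx: "S \<subseteq> V \<Longrightarrow> c \<in> V \<Longrightarrow> (\<Sum>v\<in>S. x (add c v)) = (\<Sum>v\<in>add c ` S. (x v :: real))"
  using sum.reindex[OF inj_on_subset[OF inj_add], of c S x] by simp

lemma hyper_lemma:
  assumes IH: "\<And>K y. flat (Suc k) K \<Longrightarrow> DIV0 K y \<Longrightarrow> gapset (Suc k) (\<Sum>v\<in>K. (y v)\<^sup>2)"
    and H: "flat (Suc (Suc k)) H" and K: "flat (Suc k) K" and KH: "K \<subseteq> H" and D: "DIV0 H x"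
    and z: "\<And>v. v \<in> H - K \<Longrightarrow> x v = 0"
  shows "gapset (Suc (Suc k)) (\<Sum>v\<in>H. (x v)\<^sup>2)"
proof -
  have KV: "K \<subseteq> V" using flat_basic(1)[OF K] .
  have HV: "H \<subseteq> V" using flat_basic(1)[OF H] .
  have fK: "finite K" using flat_basic(2)[OF K] .
  have fH: "finite H" using flat_basic(2)[OF H] .
  obtain e where e: "e \<in> V" "\<forall>v\<in>K. add e v \<in> H - K" using hyper_compl(2)[OF H K KH] by blast
  have D1: "dvd2 (Suc i div 2) (\<Sum>v\<in>F. x v)" if F: "flat i F" and FK: "F \<subseteq> K" for i F
  proof -
    have eF: "add e ` F \<subseteq> H - K" using e FK by blast
    have fF: "finite F" using flat_basic(2)[OF F] .
    have ne: "F \<noteq> {}" using flat_basic(4)[OF F] .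
    have "add e ` F \<noteq> F" using eF FK ne by blast
    then have tu: "F \<inter> add e ` F = {}" "flat (Suc i) (F \<union> add e ` F)" using transl_union[OF F e(1)] by auto
    have GH: "F \<union> add e ` F \<subseteq> H" using FK KH eF by blast
    have "(\<Sum>v\<in>F \<union> add e ` F. x v) = (\<Sum>v\<in>F. x v) + (\<Sum>v\<in>add e ` F. x v)"
      using sum.union_disjoint[OF fF finite_imageI[OF fF] tu(1)] .
    also have "(\<Sum>v\<in>add e ` F. x v) = 0" using z eF by (intro sum.neutral) blast
    finally have "(\<Sum>v\<in>F \<union> add e ` F. x v) = (\<Sum>v\<in>F. x v)" by simp
    moreover have "dvd2 (Suc i div 2) (\<Sum>v\<in>F \<union> add e ` F. x v)" using D tu(2) GH unfolding DIV0_def by blast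
    ultimately show ?thesis by simp
  qed
  obtain K' c where K': "flat k K'" "K' \<subseteq> K" and c: "c \<in> V" and cl: "\<forall>v\<in>K. add c v \<in> K"
    and cK: "add c ` K' = K - K'" using split_flat[OF K] by blast
  define y where "y v = (x v + x (add c v)) / 2 - (if v \<in> K' then 0 else x (add c v))" for v
  have Dy: "DIV0 K y"
    unfolding DIV0_def
  proof (intro allI impI)
    fix i F assume F: "flat i F" and FK: "F \<subseteq> K"
    have FV: "F \<subseteq> V" using FK KV by blast
    have fF: "finite F" using flat_basic(2)[OF F] .
    have s1: "(\<Sum>v\<in>F. y v) = (\<Sum>v\<in>F. x v + x (add c v)) / 2 - (\<Sum>v\<in>F - K'. x (add c v))"
      unfolding y_def by (simp add: sum_subtractf sum_divide_distrib sum_if_out[OF fF])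
    have p1: "dvd2 (i div 2) ((\<Sum>v\<in>F. x v + x (add c v)) / 2)"
    proof -
      have eq: "(\<Sum>v\<in>F. x v + x (add c v)) = (\<Sum>v\<in>F. x v) + (\<Sum>v\<in>add c ` F. x v)"
        using reidx[OF FV c] by (simp add: sum.distrib)
      have cF: "add c ` F \<subseteq> K" using cl FK by blast
      show ?thesis
      proof (cases "add c ` F = F")
        case True
        then have "(\<Sum>v\<in>F. x v + x (add c v)) / 2 = (\<Sum>v\<in>F. x v)" using eq by simp
        moreover have "dvd2 (Suc i div 2) (\<Sum>v\<in>F. x v)" using D1[OF F FK] .
        ultimately show ?thesis using dvd2_mono[of "i div 2" "Suc i div 2"] by simp
      next
        case False
        then have tu: "F \<inter> add c ` F = {}" "flat (Suc i) (F \<union> add c ` F)" using transl_union[OF F c] by auto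
        have "(\<Sum>v\<in>F \<union> add c ` F. x v) = (\<Sum>v\<in>F. x v) + (\<Sum>v\<in>add c ` F. x v)"
          using sum.union_disjoint[OF fF finite_imageI[OF fF] tu(1)] .
        moreover have "dvd2 (Suc (Suc i) div 2) (\<Sum>v\<in>F \<union> add c ` F. x v)"
          using D1[OF tu(2)] FK cF by blast
        ultimately have "dvd2 (Suc (i div 2)) (\<Sum>v\<in>F. x v + x (add c v))" using eq by simp
        then show ?thesis by (rule dvd2_half)
      qed
    qed
    have p2: "dvd2 (i div 2) (\<Sum>v\<in>F - K'. x (add c v))"
    proof (cases "F - K' = {}")
      case True show ?thesis unfolding True by (simp add: dvd2_0)
    next
      case False
      have FK': "F - K' = F \<inter> add c ` K'" using cK FK by blast
      have cK'f: "flat k (add c ` K')" using flat_transl[OF K'(1) c] .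
      have cK'K: "add c ` K' \<subseteq> K" using cK by blast
      obtain t where t: "flat t (F \<inter> add c ` K')" "2 ^ i * 2 ^ k \<le> (2::nat) ^ t * 2 ^ Suc k"
        using flat_inter[OF F cK'f _ K FK cK'K] False FK' by auto
      have "(2::nat) ^ (i + k) \<le> 2 ^ (Suc t + k)" using t(2) by (simp add: power_add)
      then have "i + k \<le> Suc t + k" using power_le_imp_le_exp[of 2] by (metis one_less_numeral_iff semiring_norm(76))
      then have it: "i \<le> Suc t" by simp
      have GV: "F - K' \<subseteq> V" using FV by blast
      have "flat t (add c ` (F - K'))" using flat_transl[OF t(1) c] FK' by simp
      moreover have "add c ` (F - K') \<subseteq> K" using cl FK by blast
      ultimately have "dvd2 (Suc t div 2) (\<Sum>v\<in>add c ` (F - K'). x v)" using D1 by blast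
      then have "dvd2 (i div 2) (\<Sum>v\<in>add c ` (F - K'). x v)" by (rule dvd2_mono[rotated]) (use it in simp)
      then show ?thesis using reidx[OF GV c] by simp
    qed
    show "dvd2 (i div 2) (\<Sum>v\<in>F. y v)" using s1 dvd2_diff[OF p1 p2] by simp
  qed
  have K'V: "K' \<subseteq> V" using K'(2) KV by blast
  have fK': "finite K'" using flat_basic(2)[OF K'(1)] .
  have yv: "y v = (x v + x (add c v)) / 2" if "v \<in> K'" for v using that y_def by simp
  have ycv: "y (add c v) = (x (add c v) - x v) / 2" if v: "v \<in> K'" for v
  proof -
    have "add c v \<in> K - K'" using cK v by blast
    moreover have "add c (add c v) = v" using cancel c v K'V by blast
    ultimately show ?thesis unfolding y_def by simp
  qed
  have split: "(\<Sum>v\<in>K. g v) = (\<Sum>v\<in>K'. g v) + (\<Sum>v\<in>K'. g (add c v))" for g :: "'a \<Rightarrow> real"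
  proof -
    have "(\<Sum>v\<in>K. g v) = (\<Sum>v\<in>K'. g v) + (\<Sum>v\<in>K - K'. g v)"
      using sum.subset_diff[OF K'(2) fK, of g] by simp
    also have "(\<Sum>v\<in>K - K'. g v) = (\<Sum>v\<in>K'. g (add c v))" using reidx[OF K'V c, of g] cK by simp
    finally show ?thesis .
  qed
  have norm: "(\<Sum>v\<in>K. (y v)\<^sup>2) = (\<Sum>v\<in>K. (x v)\<^sup>2) / 2"
  proof -
    have "(\<Sum>v\<in>K. (y v)\<^sup>2) = (\<Sum>v\<in>K'. (y v)\<^sup>2 + (y (add c v))\<^sup>2)" using split[of "\<lambda>v. (y v)\<^sup>2"] by (simp add: sum.distrib)
    also have "\<dots> = (\<Sum>v\<in>K'. ((x v)\<^sup>2 + (x (add c v))\<^sup>2) / 2)"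
      by (rule sum.cong) (simp_all add: yv ycv power2_eq_square field_simps)
    also have "\<dots> = ((\<Sum>v\<in>K'. (x v)\<^sup>2) + (\<Sum>v\<in>K'. (x (add c v))\<^sup>2)) / 2"
      by (simp add: sum.distrib[symmetric] sum_divide_distrib[symmetric])
    also have "\<dots> = (\<Sum>v\<in>K. (x v)\<^sup>2) / 2" using split[of "\<lambda>v. (x v)\<^sup>2"] by simp
    finally show ?thesis .
  qed
  have sumH: "(\<Sum>v\<in>H. (x v)\<^sup>2) = (\<Sum>v\<in>K. (x v)\<^sup>2)"
    using sum.mono_neutral_right[OF fH KH, of "\<lambda>v. (x v)\<^sup>2"] z by simp
  have "gapset (Suc k) ((\<Sum>v\<in>H. (x v)\<^sup>2) / 2)" using IH[OF K Dy] norm sumH by simp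
  then show ?thesis unfolding gapset_def by auto
qed

lemma DIV0_mono: "DIV0 H x \<Longrightarrow> F \<subseteq> H \<Longrightarrow> DIV0 F x"
  unfolding DIV0_def by blast

lemma sq_sum_zero: "finite F \<Longrightarrow> (\<Sum>v\<in>F. (x v)\<^sup>2) = (0::real) \<Longrightarrow> \<forall>v\<in>F. x v = 0"
  using sum_nonneg_eq_0_iff[of F "\<lambda>v. (x v)\<^sup>2"] by simp

lemma gap_main: "flat j H \<Longrightarrow> DIV0 H x \<Longrightarrow> gapset j (\<Sum>v\<in>H. (x v)\<^sup>2)"
proof (induction j arbitrary: H x rule: less_induct)
  case (less j)
  have HV: "H \<subseteq> V" using flat_basic(1)[OF less.prems(1)] .
  have fH: "finite H" using flat_basic(2)[OF less.prems(1)] .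
  have xint: "\<And>v. v \<in> H \<Longrightarrow> x v \<in> \<int>" using DIV0_int[OF less.prems(2)] HV by blast
  define N where "N = (\<Sum>v\<in>H. (x v)\<^sup>2)"
  have N0: "N \<ge> 0" unfolding N_def by (simp add: sum_nonneg)
  consider "j = 0" | "j = 1" | k where "j = Suc (Suc k)" by (metis One_nat_def not0_implies_Suc)
  then show ?case
  proof cases
    case 1
    have "N \<in> \<int>" unfolding N_def using sum_sq_int[OF fH xint] by simp
    then have "N = 0 \<or> N = 1 \<or> N \<ge> 2" using int_nonneg_cases N0 by blast
    then show ?thesis using 1 unfolding gapset_def N_def[symmetric] by auto
  next
    case 2
    have "N \<in> \<int>" unfolding N_def using sum_sq_int[OF fH xint] by simp
    then have "N = 0 \<or> N = 1 \<or> N \<ge> 2" using int_nonneg_cases N0 by blast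
    then show ?thesis using 2 unfolding gapset_def N_def[symmetric] by auto
  next
    case 3
    define g where "g F = (\<Sum>v\<in>F. (x v)\<^sup>2)" for F
    have gapF: "gapset i (g F)" if "flat i F" "F \<subseteq> H" "i < j" for i F
      using less.IH[OF that(3) that(1) DIV0_mono[OF less.prems(2) that(2)]] unfolding g_def .
    show ?thesis unfolding N_def[symmetric]
    proof (rule ccontr)
      assume nG: "\<not> gapset j N"
      then have nN: "N \<noteq> 0" "2 * N \<noteq> 2 ^ j" "4 * N < 3 * 2 ^ j" unfolding gapset_def by auto
      have HL: False if K: "flat (Suc k) K" "K \<subseteq> H" and zz: "\<forall>v\<in>H - K. x v = 0" for K
      proof -
        have "gapset (Suc (Suc k)) (\<Sum>v\<in>H. (x v)\<^sup>2)"
          by (rule hyper_lemma[OF _ _ K(1) K(2) less.prems(2)])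
            (use less.IH 3 less.prems(1) zz in auto)
        then show False using nG 3 N_def by simp
      qed
      have hyp: "g K \<noteq> 0 \<and> g (H - K) \<noteq> 0 \<and> g K + g (H - K) = N \<and> gapset (Suc k) (g K) \<and> gapset (Suc k) (g (H - K))"
        if K: "flat (Suc k) K" "K \<subseteq> H" for K
      proof -
        have C: "flat (Suc k) (H - K)" using hyper_compl(1)[OF _ K(1) K(2)] less.prems(1) 3 by simp
        have fK: "finite K" using flat_basic(2)[OF K(1)] .
        have gC: "g (H - K) \<noteq> 0"
        proof
          assume "g (H - K) = 0"
          then have "\<forall>v\<in>H - K. x v = 0" using sq_sum_zero[of "H - K" x] fH unfolding g_def by simp
          then show False using HL[OF K] by blast
        qed
        have gK: "g K \<noteq> 0"
        proof
          assume "g K = 0"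
          then have "\<forall>v\<in>K. x v = 0" using sq_sum_zero[OF fK, of x] unfolding g_def by simp
          moreover have "H - (H - K) = K" using K(2) by blast
          ultimately show False using HL[OF C] by auto
        qed
        have "g K + g (H - K) = N" unfolding g_def N_def using sum.subset_diff[OF K(2) fH, of "\<lambda>v. (x v)\<^sup>2"] by simp
        moreover have "gapset (Suc k) (g K)" using gapF[OF K] 3 by simp
        moreover have "gapset (Suc k) (g (H - K))" using gapF[OF C] 3 by auto
        ultimately show ?thesis using gC gK by blast
      qed
      have pk: "(0::real) < 2 ^ k" by simp
      have lowN: "2 ^ j < 2 * N"
      proof -
        obtain K c where K: "flat (Suc k) K" "K \<subseteq> H" using split_flat[of "Suc k" H] less.prems(1) 3 by auto
        have "g K \<ge> 2 ^ k" "g (H - K) \<ge> 2 ^ k" using hyp[OF K] pk unfolding gapset_def by auto (use pk in linarith)+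
        then have "2 * N \<ge> 2 ^ j" using hyp[OF K] 3 by simp
        then show ?thesis using nN by simp
      qed
      define LC where "LC i \<longleftrightarrow> (\<forall>F. flat i F \<longrightarrow> F \<subseteq> H \<longrightarrow> 2 * g F = 2 ^ i \<or> 2 * g F = 2 * N - (2 ^ (j - i) - 1) * 2 ^ i)" for i
      have base: "LC (Suc k)"
        unfolding LC_def
      proof (intro allI impI)
        fix K assume K: "flat (Suc k) K" "K \<subseteq> H"
        have hK: "g K \<noteq> 0" "g (H - K) \<noteq> 0" "g K + g (H - K) = N" "gapset (Suc k) (g K)" "gapset (Suc k) (g (H - K))"
          using hyp[OF K] by auto
        have jj: "j - Suc k = 1" using 3 by simp
        show "2 * g K = 2 ^ Suc k \<or> 2 * g K = 2 * N - (2 ^ (j - Suc k) - 1) * 2 ^ Suc k"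
          using hK nN 3 unfolding jj gapset_def by auto
      qed
      have step: "LC i" if i: "Suc i \<le> Suc k" and LCi: "LC (Suc i)" for i
        unfolding LC_def
      proof (intro allI impI)
        fix F assume F: "flat i F" "F \<subseteq> H"
        obtain a where aF: "a \<in> F" using flat_basic(4)[OF F(1)] by blast
        have aH: "a \<in> H" using aF F(2) by blast
        have aV: "a \<in> V" using aH HV by blast
        obtain D where D: "subsp D" "card D = 2 ^ i" "F = add a ` D" using flat_base[OF F(1) aF] by blast
        obtain E where E: "subsp E" "card E = 2 ^ j" "H = add a ` E" using flat_base[OF less.prems(1) aH] by blast
        have DE: "D \<subseteq> E" using coset_dir_sub[OF aV D(1) E(1)] F(2) D(3) E(3) by simp
        have cl: "add s d \<in> H" if "s \<in> H" "d \<in> D" for s d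
          using coset_closed[OF aV E(1)] that DE E(3) by blast
        define A where "A = (\<lambda>b. add b ` D) ` H"
        note cp = coset_partition[OF D(1) HV cl, folded A_def]
        have mem: "flat i C \<and> C \<subseteq> H" if CA: "C \<in> A" for C
        proof -
          obtain b where b: "b \<in> H" "C = add b ` D" using CA unfolding A_def by blast
          have "flat i C" using flat_of_base[OF _ D(1) D(2)] b HV by blast
          moreover have "C \<subseteq> H" using b cl by blast
          ultimately show ?thesis by blast
        qed
        have ji: "j - i = Suc (Suc (k - i))" using i 3 by simp
        have jsplit: "j = i + (j - i)" using ji by arith
        have cardA: "card A = 2 ^ (j - i)"
        proof -
          have "2 ^ i * card A = 2 ^ j" using cp(5) D(2) flat_basic(3)[OF less.prems(1)] by simp
          moreover have "(2::nat) ^ j = 2 ^ i * 2 ^ (j - i)" by (subst jsplit) (simp add: power_add)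
          ultimately show ?thesis by simp
        qed
        define n :: real where "n = 2 ^ (j - i)"
        define \<nu> :: real where "\<nu> = 2 ^ i"
        define h where "h = N - (n - 2) * \<nu> / 2"
        have FA: "F \<in> A" unfolding A_def using aH D(3) by blast
        have sumA: "(\<Sum>C\<in>A. g C) = N"
        proof -
          have finC: "\<forall>C\<in>A. finite C" using mem flat_basic(2) by blast
          have djC: "\<forall>C\<in>A. \<forall>C'\<in>A. C \<noteq> C' \<longrightarrow> C \<inter> C' = {}" using cp(3) by blast
          have "(\<Sum>C\<in>A. g C) = (\<Sum>v\<in>\<Union>A. (x v)\<^sup>2)" unfolding g_def
            using sum.Union_disjoint[OF finC djC, of "\<lambda>v. (x v)\<^sup>2"] by (simp add: comp_def)
          then show ?thesis using cp(1) N_def by simp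
        qed
        have n4: "4 \<le> n" unfolding n_def ji by simp
        have nnu: "n * \<nu> = 2 ^ j" unfolding n_def \<nu>_def by (subst (2) jsplit) (simp add: power_add)
        have pl: "2 * g F = \<nu> \<or> 2 * g F = 2 * h - \<nu>"
        proof (rule pair_lemma[where A = A and f = g and n = n and \<nu> = \<nu> and S = N and h = h, OF cp(4) _ n4 _ _ sumA])
          show "real (card A) = n" unfolding n_def cardA by simp
          show "0 < \<nu>" unfolding \<nu>_def by simp
          show "\<And>C. C \<in> A \<Longrightarrow> g C = 0 \<or> 2 * g C = \<nu> \<or> 3 * \<nu> \<le> 4 * g C"
            using gapF mem 3 i unfolding \<nu>_def gapset_def by auto
          show "n * \<nu> < 2 * N" using nnu lowN by simp
          show "4 * N < 3 * n * \<nu>" using nnu nN by simp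
          show "2 * h = 2 * N - (n - 2) * \<nu>" unfolding h_def by simp
          show "F \<in> A" by (rule FA)
          fix C C' assume C: "C \<in> A" "C' \<in> A" "C \<noteq> C'"
          obtain b where b: "b \<in> H" "C = add b ` D" using C(1) unfolding A_def by blast
          obtain b' where b': "b' \<in> H" "C' = add b' ` D" using C(2) unfolding A_def by blast
          have U: "flat (Suc i) (C \<union> C')" using flat_union[OF _ _ D(1) D(2)] b b' C(3) HV by blast
          have UH: "C \<union> C' \<subseteq> H" using mem C by blast
          have dj: "C \<inter> C' = {}" using cp(3) C by blast
          have gU: "g (C \<union> C') = g C + g C'" unfolding g_def
            using sum.union_disjoint[OF _ _ dj] mem[OF C(1)] mem[OF C(2)] flat_basic(2) by blast
          have disj: "2 * g (C \<union> C') = 2 ^ Suc i \<or> 2 * g (C \<union> C') = 2 * N - (2 ^ (j - Suc i) - 1) * 2 ^ Suc i"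
            using LCi U UH unfolding LC_def by blast
          have X: "(2 ^ (j - Suc i) - 1) * 2 ^ Suc i = (n - 2) * \<nu>"
          proof -
            have "j - Suc i = Suc (k - i)" using ji by simp
            then show ?thesis unfolding n_def \<nu>_def ji by (simp add: algebra_simps)
          qed
          show "g C + g C' = \<nu> \<or> g C + g C' = h"
          proof (cases "2 * g (C \<union> C') = 2 ^ Suc i")
            case True
            then have "g C + g C' = \<nu>" using gU unfolding \<nu>_def by simp
            then show ?thesis by blast
          next
            case False
            then have "2 * g (C \<union> C') = 2 * N - (2 ^ (j - Suc i) - 1) * 2 ^ Suc i" using disj by blast
            then have "2 * (g C + g C') = 2 * N - (n - 2) * \<nu>" using gU X by simp
            then have "g C + g C' = h" unfolding h_def by (simp add: field_simps)
            then show ?thesis by blast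
          qed
        qed
        have e1: "2 * h - \<nu> = 2 * N - (2 ^ (j - i) - 1) * 2 ^ i"
          unfolding h_def n_def \<nu>_def by (simp add: field_simps)
        from pl show "2 * g F = 2 ^ i \<or> 2 * g F = 2 * N - (2 ^ (j - i) - 1) * 2 ^ i"
        proof
          assume "2 * g F = \<nu>" then show ?thesis unfolding \<nu>_def by simp
        next
          assume "2 * g F = 2 * h - \<nu>" then show ?thesis using e1 by simp
        qed
      qed
      have all: "LC (Suc k - d)" if "d \<le> Suc k" for d
        using that
      proof (induction d)
        case 0 then show ?case using base by simp
      next
        case (Suc d)
        have dk: "d \<le> k" using Suc.prems by simp
        have "LC (Suc k - d)" using Suc dk by simp
        moreover have "Suc k - d = Suc (Suc k - Suc d)" using dk by simp
        ultimately have "LC (Suc (Suc k - Suc d))" by simp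
        then show ?case by (rule step[rotated]) simp
      qed
      have LC0: "LC 0" using all[of "Suc k"] by simp
      have pt: "2 * (x v)\<^sup>2 = 2 * N - (2 ^ j - 1)" if v: "v \<in> H" for v
      proof -
        have "flat 0 {v}" using flat0 v HV by blast
        then have "2 * g {v} = 2 ^ 0 \<or> 2 * g {v} = 2 * N - (2 ^ (j - 0) - 1) * 2 ^ 0"
          using LC0 v unfolding LC_def by blast
        then show ?thesis using int_sq_half[OF xint[OF v]] unfolding g_def by auto
      qed
      have "2 * N = (\<Sum>v\<in>H. 2 * (x v)\<^sup>2)" unfolding N_def by (simp add: sum_distrib_left)
      also have "\<dots> = real (card H) * (2 * N - (2 ^ j - 1))" using pt by simp
      also have "real (card H) = 2 ^ j" using flat_basic(3)[OF less.prems(1)] by simp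
      finally have eq: "2 * N = 2 ^ j * (2 * N - (2 ^ j - 1))" .
      define P :: real where "P = 2 ^ j"
      have "(1::real) \<le> 2 ^ k" by simp
      then have P1: "P > 1" unfolding P_def 3 power_Suc by linarith
      have "(P - 1) * (2 * N - P) = 0" using eq unfolding P_def[symmetric] by (simp add: algebra_simps)
      then have "2 * N = P" using P1 by simp
      then show False using nN unfolding P_def by simp
    qed
  qed
qed

end


lemma vadd_len: "length u = m \<Longrightarrow> length v = m \<Longrightarrow> length (vadd u v) = m"
  unfolding vadd_def by simp

lemma vadd_nth: "length u = m \<Longrightarrow> length v = m \<Longrightarrow> k < m \<Longrightarrow> vadd u v ! k = (u ! k \<noteq> v ! k)"
  unfolding vadd_def by simp

lemma f2_Vm: "f2sp (Vm m) vadd (vzero m) m"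
proof
  have eq: "Vm m = {xs. set xs \<subseteq> (UNIV::bool set) \<and> length xs = m}" unfolding Vm_def by simp
  show "finite (Vm m)" unfolding eq by (rule finite_lists_length_eq) simp
  show "card (Vm m) = 2 ^ m" using card_lists_length_eq[of "UNIV::bool set" m] unfolding Vm_def by simp
  show "vzero m \<in> Vm m" unfolding vzero_def Vm_def by simp
  fix u v w assume u: "u \<in> Vm m"
  then have lu: "length u = m" unfolding Vm_def by simp
  show "vadd (vzero m) u = u" using lu
    by (intro nth_equalityI) (simp_all add: vadd_len vadd_nth vzero_def)
  show "vadd u u = vzero m" using lu
    by (intro nth_equalityI) (simp_all add: vadd_len vadd_nth vzero_def)
  assume v: "v \<in> Vm m"
  then have lv: "length v = m" unfolding Vm_def by simp
  show "vadd u v \<in> Vm m" using lu lv vadd_len unfolding Vm_def by simp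
  show "vadd u v = vadd v u" using lu lv
    by (intro nth_equalityI) (auto simp add: vadd_len vadd_nth)
  assume w: "w \<in> Vm m"
  then have lw: "length w = m" unfolding Vm_def by simp
  show "vadd (vadd u v) w = vadd u (vadd v w)" using lu lv lw
    by (intro nth_equalityI) (auto simp add: vadd_len vadd_nth)
qed

lemma exp_arith: "i + r \<le> t + m \<Longrightarrow> r \<le> m \<Longrightarrow> i div 2 \<le> (m - r) div 2 + (t::nat)"
proof -
  assume a: "i + r \<le> t + m" "r \<le> m"
  define a' where "a' = m - r"
  have "i \<le> a' + t" using a unfolding a'_def by simp
  have "i div 2 \<le> (a' + t) div 2" using \<open>i \<le> a' + t\<close> by (rule div_le_mono)
  also have "(a' + t) div 2 \<le> a' div 2 + t" by linarith
  finally show ?thesis unfolding a'_def .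
qed

context f2sp
begin

lemma gen_div:
  assumes U: "flat r U" and r: "r \<le> M" and F: "flat i F"
  shows "dvd2 (i div 2) (\<Sum>v\<in>F. (2::real) ^ ((M - r) div 2) * (if v \<in> U then 1 else 0))"
proof -
  have fF: "finite F" using flat_basic(2)[OF F] .
  have "(\<Sum>v\<in>F. (2::real) ^ ((M - r) div 2) * (if v \<in> U then 1 else 0)) = 2 ^ ((M - r) div 2) * (\<Sum>v\<in>F. (if v \<in> U then 1 else 0))"
    by (simp add: sum_distrib_left)
  also have "(\<Sum>v\<in>F. (if v \<in> U then 1 else 0)) = real (card (F \<inter> U))"
    using fF by (simp add: sum.If_cases Int_def)
  finally have sg: "(\<Sum>v\<in>F. (2::real) ^ ((M - r) div 2) * (if v \<in> U then 1 else 0)) = 2 ^ ((M - r) div 2) * real (card (F \<inter> U))" .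
  show ?thesis
  proof (cases "F \<inter> U = {}")
    case True then show ?thesis using sg dvd2_0 by simp
  next
    case False
    obtain t where t: "flat t (F \<inter> U)" "2 ^ i * 2 ^ r \<le> (2::nat) ^ t * 2 ^ M"
      using flat_inter[OF F U False flat_V flat_basic(1)[OF F] flat_basic(1)[OF U]] by blast
    have "(2::nat) ^ (i + r) \<le> 2 ^ (t + M)" using t(2) by (simp add: power_add)
    then have "i + r \<le> t + M" using power_le_imp_le_exp[of 2] by (metis one_less_numeral_iff semiring_norm(76))
    then have le: "i div 2 \<le> (M - r) div 2 + t" using r exp_arith by blast
    have "real (card (F \<inter> U)) = 2 ^ t" using flat_basic(3)[OF t(1)] by simp
    then have "(\<Sum>v\<in>F. (2::real) ^ ((M - r) div 2) * (if v \<in> U then 1 else 0)) = 2 ^ ((M - r) div 2 + t)" using sg by (simp add: power_add)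
    then show ?thesis using dvd2_pow[OF le] by simp
  qed
qed

lemma flat_iff: "flat r U \<longleftrightarrow> (\<exists>a\<in>V. \<exists>W. (W \<subseteq> V \<and> z \<in> W \<and> (\<forall>u\<in>W. \<forall>v\<in>W. add u v \<in> W)) \<and> card W = 2 ^ r \<and> U = add a ` W)"
  unfolding flat_def subsp_def by simp

lemma gap_top:
  assumes "\<And>i F. flat i F \<Longrightarrow> dvd2 (i div 2) (\<Sum>v\<in>F. x v)"
  shows "gapset M (\<Sum>v\<in>V. (x v)\<^sup>2)"
proof -
  have "DIV0 V x" unfolding DIV0_def using assms by blast
  then show ?thesis by (rule gap_main[OF flat_V])
qed

end

lemma aff_flat: "affine_subspace_dim m r U \<longleftrightarrow> f2sp.flat (Vm m) vadd (vzero m) r U"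
  unfolding affine_subspace_dim_def f2sp.flat_iff[OF f2_Vm] lin_subspace_def by simp

theorem theorem3p3:
  fixes m :: nat and x :: "bool list \<Rightarrow> real"
  assumes "m \<ge> 1"
    and "x \<in> BW m"
    and "ip m x x > 2 powi (int m - 1)"
  shows "ip m x x \<ge> 2 powi (int m - 1) + 2 powi (int m - 2)"
proof -
  have "x \<in> int_span (BW_gens m)" using assms(2) unfolding BW_def .
  then obtain G c where G: "finite G" "G \<subseteq> BW_gens m" and xG: "x = (\<lambda>v. \<Sum>g\<in>G. of_int (c g) * g v)"
    unfolding int_span_def mem_Collect_eq by blast
  have Dx: "dvd2 (i div 2) (\<Sum>v\<in>F. x v)" if F: "f2sp.flat (Vm m) vadd (vzero m) i F" for i F
  proof -
    have gen: "dvd2 (i div 2) (\<Sum>v\<in>F. g v)" if gG: "g \<in> G" for g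
    proof -
      have "g \<in> BW_gens m" using gG G(2) by blast
      then obtain r U where rU: "r \<le> m" "affine_subspace_dim m r U"
        and g: "g = (\<lambda>v. (2::real) ^ ((m - r) div 2) * xU U v)"
        unfolding BW_gens_def mem_Collect_eq by blast
      show ?thesis using f2sp.gen_div[OF f2_Vm, where r = r and U = U and i = i and F = F] rU F unfolding g xU_def aff_flat by simp
    qed
    have "(\<Sum>v\<in>F. x v) = (\<Sum>g\<in>G. of_int (c g) * (\<Sum>v\<in>F. g v))"
      unfolding xG by (simp add: sum_distrib_left sum.swap[of _ F])
    also have "dvd2 (i div 2) \<dots>"
      by (rule dvd2_sum[OF G(1)]) (rule dvd2_mult[OF gen])
    finally show ?thesis .
  qed
  have gs: "f2sp.gapset m (\<Sum>v\<in>Vm m. (x v)\<^sup>2)" by (rule f2sp.gap_top[OF f2_Vm Dx])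
  have ipeq: "ip m x x = (\<Sum>v\<in>Vm m. (x v)\<^sup>2)" unfolding ip_def by (simp add: power2_eq_square)
  have p1: "2 powi (int m - 1) = (2::real) ^ m / 2"
    using power_int_diff[of "2::real" "int m" 1] by simp
  have p2: "2 powi (int m - 2) = (2::real) ^ m / 4"
    using power_int_diff[of "2::real" "int m" 2] by simp
  have disj: "ip m x x = 0 \<or> 2 * ip m x x = 2 ^ m \<or> 4 * ip m x x \<ge> 3 * 2 ^ m"
    using gs unfolding ipeq[symmetric] f2sp.gapset_def[OF f2_Vm] .
  have A: "ip m x x > 2 ^ m / 2" using assms(3) unfolding p1 .
  have pos: "(0::real) < 2 ^ m" by simp
  from disj have "4 * ip m x x \<ge> 3 * 2 ^ m"
  proof (elim disjE)
    assume "ip m x x = 0" then show ?thesis using A pos by linarith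
  next
    assume "2 * ip m x x = 2 ^ m" then show ?thesis using A by linarith
  qed
  then show ?thesis unfolding p1 p2 by linarith
qed


end
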